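(* Let $n\in\mathbb{Z}^+$, $v\in\mathbb{N}$ and $z\in\mathbb{Z}\setminus\{0,-1\}$. Define $c_0=\tilde c_0=1$ and, for $v\ge 1$, recursively $$c_v=\frac{1}{z}\sum_{j=1}^{v}e_j^{(2v-1)}c_{v-j},\qquad \tilde c_v=-\frac{1}{z+1}\sum_{j=1}^{v}e_j^{(2v-1)}\tilde c_{v-j}.$$ Then $c_v\in z^{-v}\mathbb{Z}[z]$ and $\tilde c_v\in (z+1)^{-v}\mathbb{Z}[z]$. Moreover, if $\gcd(n,2z)=1$ then $$\sum_{k=0}^{n-1}(2k+1)^{2v}D_k(z)\equiv c_v\sum_{k=0}^{n-1}D_k(z)\pmod n,$$ and if $\gcd(n,2(z+1))=1$ then $$\sum_{k=0}^{n-1}(-1)^k(2k+1)^{2v}D_k(z)\equiv \tilde c_v\sum_{k=0}^{n-1}(-1)^kD_k(z)\pmod n.$$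
   Context: The Delannoy polynomials are $D_n(z)=\sum_{k=0}^{n}\binom{n}{k}\binom{n+k}{k}z^k$ for $n\in\mathbb{N}$. For $s\in\mathbb{N}$ and $j=1,2,\dots,\lfloor (s+1)/2\rfloor$, set $e_j^{(s)}=\binom{s}{2j}2^{2j-1}+\binom{s}{2j-1}2^{2j-2}\in\mathbb{Z}$. Congruences involving rational numbers are understood in the usual way: for a rational $a/b$ with $\gcd(b,n)=1$, $a/b\equiv c\pmod n$ means $a\equiv bc\pmod n$ (here the denominators of $c_v$, resp. $\tilde c_v$, evaluated at the integer $z$, divide a power of $z$, resp. $z+1$, hence are coprime to $n$ under the stated hypotheses). *)

theory Defs
  imports Complex_Main "HOL-Computational_Algebra.Polynomial" "HOL-Number_Theory.Number_Theory"
begin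

definition delannoy :: "nat \<Rightarrow> int \<Rightarrow> int" where
  "delannoy n z = (\<Sum>k=0..n. int (n choose k) * int ((n + k) choose k) * z ^ k)"

definition ecoef :: "nat \<Rightarrow> nat \<Rightarrow> int" where
  "ecoef s j = int (s choose (2*j)) * 2 ^ (2*j - 1) + int (s choose (2*j - 1)) * 2 ^ (2*j - 2)"

fun cseq :: "rat \<Rightarrow> nat \<Rightarrow> rat" where
  "cseq z 0 = 1"
| "cseq z (Suc m) = (1 / z) *
     (\<Sum>j\<in>{1..Suc m}. of_int (ecoef (2 * Suc m - 1) j) * cseq z (Suc m - j))"

fun ctseq :: "rat \<Rightarrow> nat \<Rightarrow> rat" where
  "ctseq z 0 = 1"
| "ctseq z (Suc m) = - (1 / (z + 1)) *
     (\<Sum>j\<in>{1..Suc m}. of_int (ecoef (2 * Suc m - 1) j) * ctseq z (Suc m - j))"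

text \<open>Congruence of rationals modulo an integer n: x == y (mod n) iff
  b*(x - y) is an integer divisible by n for some b coprime to n
  (equivalently: the reduced denominator of x - y is coprime to n and n divides its numerator).\<close>
definition rat_cong :: "rat \<Rightarrow> rat \<Rightarrow> int \<Rightarrow> bool" where
  "rat_cong x y n \<longleftrightarrow> (\<exists>b a :: int. coprime b n \<and> of_int b * (x - y) = of_int a \<and> n dvd a)"

end

theory Submission
  imports Defs
begin


definition Anat :: "nat \<Rightarrow> nat \<Rightarrow> nat" where
  "Anat n k = (n choose k) * ((n+k) choose k)"

lemma Afact: "k \<le> n \<Longrightarrow> real (Anat n k) = fact (n+k) / (fact k ^ 2 * fact (n-k))"
proof -
  assume h: "k \<le> n"
  have "real (Anat n k) = (fact n / (fact k * fact (n-k))) * (fact (n+k) / (fact k * fact n))"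
    using h by (simp add: Anat_def binomial_fact)
  also have "\<dots> = fact (n+k) / (fact k ^ 2 * fact (n-k))"
    by (simp add: field_simps power2_eq_square)
  finally show ?thesis .
qed

lemma Azero: "n < k \<Longrightarrow> Anat n k = 0"
  by (simp add: Anat_def)

lemma coef_aux:
  fixes a b Q :: real assumes "a \<ge> 0" "b \<ge> 0"
  shows "(a+b+3) * (Q*((2*a+b+4)*(2*a+b+3)/((a+1)^2*((b+2)*(b+1))))) + (a+b+2)*(Q/((a+1)^2))
    = (2*(a+b+1)+3) * (Q*(2*a+b+3)/((a+1)^2*(b+1)) + 2*(Q/((b+2)*(b+1))))"
proof -
  have p: "a+1 > 0" "b+1>0" "b+2>0" using assms by linarith+
  have p2: "(a+1)^2 > 0" using p by simp
  show ?thesis using p p2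
    by (simp add: divide_simps) (simp add: algebra_simps power2_eq_square)
qed

lemma coef_real:
  "real (m+2) * real (Anat (m+2) (Suc k)) + real (m+1) * real (Anat m (Suc k))
   = real (2*m+3) * (real (Anat (m+1) (Suc k)) + 2 * real (Anat (m+1) k))"
proof -
  consider "Suc k \<le> m" | "Suc k = m+1" | "Suc k = m+2" | "Suc k > m+2" by linarith
  then show ?thesis
  proof cases
    case 1
    then obtain d where md: "m = Suc k + d" using le_Suc_ex by blast
    define Q where "Q = (fact (m + Suc k) :: real) / (fact k ^ 2 * fact d)"
    have Fk: "(fact (Suc k) :: real) = (real k + 1) * fact k" by simp
    have Fd1: "(fact (Suc d) :: real) = (real d + 1) * fact d" by simp
    have Fd2: "(fact (Suc (Suc d)) :: real) = (real d + 2) * ((real d + 1) * fact d)" by (simp add: algebra_simps)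
    have Fm1: "(fact (Suc (m + Suc k)) :: real) = (real m + real k + 2) * fact (m + Suc k)" by (simp add: algebra_simps)
    have Fm2: "(fact (Suc (Suc (m + Suc k))) :: real) = (real m + real k + 3) * ((real m + real k + 2) * fact (m + Suc k))" by (simp add: algebra_simps)
    have e1: "real (Anat (m+2) (Suc k)) = Q*((2*real k+real d+4)*(2*real k+real d+3)/((real k+1)^2*((real d+2)*(real d+1))))"
    proof -
      have "real (Anat (m+2) (Suc k)) = fact (Suc (Suc (m + Suc k))) / (fact (Suc k) ^ 2 * fact (Suc (Suc d)))"
        using md by (simp add: Afact)
      also have "\<dots> = Q*((2*real k+real d+4)*(2*real k+real d+3)/((real k+1)^2*((real d+2)*(real d+1))))"
        unfolding Fk Fd2 Fm2 Q_def using md by (simp add: field_simps power2_eq_square)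
      finally show ?thesis .
    qed
    have e2: "real (Anat m (Suc k)) = Q/((real k+1)^2)"
    proof -
      have "real (Anat m (Suc k)) = fact (m + Suc k) / (fact (Suc k) ^ 2 * fact d)"
        using md by (simp add: Afact)
      also have "\<dots> = Q/((real k+1)^2)"
        unfolding Fk Q_def by (simp add: field_simps power2_eq_square)
      finally show ?thesis .
    qed
    have e3: "real (Anat (m+1) (Suc k)) = Q*(2*real k+real d+3)/((real k+1)^2*(real d+1))"
    proof -
      have "real (Anat (m+1) (Suc k)) = fact (Suc (m + Suc k)) / (fact (Suc k) ^ 2 * fact (Suc d))"
        using md by (simp add: Afact)
      also have "\<dots> = Q*(2*real k+real d+3)/((real k+1)^2*(real d+1))"
        unfolding Fk Fd1 Fm1 Q_def using md by (simp add: field_simps power2_eq_square)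
      finally show ?thesis .
    qed
    have e4: "real (Anat (m+1) k) = Q/((real d+2)*(real d+1))"
    proof -
      have "real (Anat (m+1) k) = fact (m + Suc k) / (fact k ^ 2 * fact (Suc (Suc d)))"
        using md by (simp add: Afact)
      also have "\<dots> = Q/((real d+2)*(real d+1))"
        unfolding Fd2 Q_def by (simp add: field_simps power2_eq_square)
      finally show ?thesis .
    qed
    have rm: "real m = real k + real d + 1" using md by simp
    show ?thesis unfolding e1 e2 e3 e4
      using coef_aux[of "real k" "real d" Q] rm by (simp add: algebra_simps)
  next
    case 2
    then have mk: "m = k" by simp
    define Q where "Q = (fact (Suc (k+k)) :: real) / (fact k ^ 2)"
    have Fk: "(fact (Suc k) :: real) = (real k + 1) * fact k" by simp
    have F3: "(fact (Suc (Suc (Suc (k+k)))) :: real) = (2*real k+3)*((2*real k+2)*fact (Suc (k+k)))"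
      by (simp add: algebra_simps del: fact_Suc) (simp add: algebra_simps)
    have F2: "(fact (Suc (Suc (k+k))) :: real) = (2*real k+2)*fact (Suc (k+k))"
      by (simp add: algebra_simps del: fact_Suc) (simp add: algebra_simps)
    have nz: "(fact k :: real) \<noteq> 0" "real k + 1 \<noteq> 0" by simp_all
    have e1: "real (Anat (m+2) (Suc k)) = Q*(2*real k+3)*(2*real k+2)/((real k+1)^2)"
    proof -
      have "real (Anat (m+2) (Suc k)) = fact (Suc (Suc (Suc (k+k)))) / (fact (Suc k) ^ 2 * fact 1)"
        using mk by (simp add: Afact)
      also have "\<dots> = Q*(2*real k+3)*(2*real k+2)/((real k+1)^2)"
        unfolding Q_def F3 Fk using nz by (simp add: field_simps power_mult_distrib del: fact_Suc) (simp add: power2_eq_square algebra_simps del: fact_Suc)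
      finally show ?thesis .
    qed
    have e3: "real (Anat (m+1) (Suc k)) = Q*(2*real k+2)/((real k+1)^2)"
    proof -
      have "real (Anat (m+1) (Suc k)) = fact (Suc (Suc (k+k))) / (fact (Suc k) ^ 2 * fact 0)"
        using mk by (simp add: Afact)
      also have "\<dots> = Q*(2*real k+2)/((real k+1)^2)"
        unfolding Q_def F2 Fk using nz by (simp add: field_simps power_mult_distrib del: fact_Suc) (simp add: power2_eq_square algebra_simps del: fact_Suc)
      finally show ?thesis .
    qed
    have e4: "real (Anat (m+1) k) = Q"
      using mk by (simp add: Afact Q_def)
    have e2: "Anat m (Suc k) = 0" using mk by (simp add: Azero)
    have p: "real k + 1 > 0" by simp
    show ?thesis unfolding e1 e2 e3 e4 using mk p
      by (simp add: divide_simps) (simp add: algebra_simps power2_eq_square)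
  next
    case 3
    then have mk: "k = Suc m" by simp
    define Q where "Q = (fact (Suc (Suc (m+m))) :: real) / (fact (Suc m) ^ 2)"
    have Fk: "(fact (Suc (Suc m)) :: real) = (real m + 2) * fact (Suc m)" by (simp add: algebra_simps del: fact_Suc) (simp add: algebra_simps)
    have F4: "(fact (Suc (Suc (Suc (Suc (m+m))))) :: real) = (2*real m+4)*((2*real m+3)*fact (Suc (Suc (m+m))))"
      by (simp add: algebra_simps del: fact_Suc) (simp add: algebra_simps)
    have nz: "(fact (Suc m) :: real) \<noteq> 0" "real m + 2 \<noteq> 0" by simp_all
    have e1: "real (Anat (m+2) (Suc k)) = Q*(2*real m+4)*(2*real m+3)/((real m+2)^2)"
    proof -
      have "real (Anat (m+2) (Suc k)) = fact (Suc (Suc (Suc (Suc (m+m))))) / (fact (Suc (Suc m)) ^ 2 * fact 0)"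
        using mk by (simp add: Afact)
      also have "\<dots> = Q*(2*real m+4)*(2*real m+3)/((real m+2)^2)"
        unfolding Q_def F4 Fk using nz by (simp add: field_simps power_mult_distrib del: fact_Suc) (simp add: power2_eq_square algebra_simps del: fact_Suc)
      finally show ?thesis .
    qed
    have e4: "real (Anat (m+1) k) = Q"
      using mk by (simp add: Afact Q_def)
    have e2: "Anat m (Suc k) = 0" "Anat (m+1) (Suc k) = 0" using mk by (simp_all add: Azero)
    have p: "real m + 2 > 0" by simp
    show ?thesis unfolding e1 e2 e4 using mk p
      by (simp add: divide_simps) (simp add: algebra_simps power2_eq_square)
  next
    case 4
    then show ?thesis by (simp add: Azero)
  qed
qed



lemma coef_int:
  "int (m+2) * int (Anat (m+2) (Suc k)) + int (m+1) * int (Anat m (Suc k))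
   = int (2*m+3) * (int (Anat (m+1) (Suc k)) + 2 * int (Anat (m+1) k))"
proof -
  have h: "real (m+2) * real (Anat (m+2) (Suc k)) + real (m+1) * real (Anat m (Suc k))
   = real (2*m+3) * (real (Anat (m+1) (Suc k)) + 2 * real (Anat (m+1) k))" by (rule coef_real)
  have e1: "real ((m+2) * Anat (m+2) (Suc k) + (m+1) * Anat m (Suc k)) = real (m+2) * real (Anat (m+2) (Suc k)) + real (m+1) * real (Anat m (Suc k))"
    by (simp only: of_nat_add of_nat_mult)
  have e2: "real ((2*m+3) * (Anat (m+1) (Suc k) + 2 * Anat (m+1) k)) = real (2*m+3) * (real (Anat (m+1) (Suc k)) + 2 * real (Anat (m+1) k))"
    by (simp only: of_nat_add of_nat_mult of_nat_numeral)
  have "real ((m+2) * Anat (m+2) (Suc k) + (m+1) * Anat m (Suc k)) = real ((2*m+3) * (Anat (m+1) (Suc k) + 2 * Anat (m+1) k))"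
    unfolding e1 e2 by (rule h)
  then have "(m+2) * Anat (m+2) (Suc k) + (m+1) * Anat m (Suc k)
      = (2*m+3) * (Anat (m+1) (Suc k) + 2 * Anat (m+1) k)" by (simp only: of_nat_eq_iff)
  then have "int ((m+2) * Anat (m+2) (Suc k) + (m+1) * Anat m (Suc k))
      = int ((2*m+3) * (Anat (m+1) (Suc k) + 2 * Anat (m+1) k))" by (simp only:)
  then show ?thesis by (simp only: of_nat_add of_nat_mult of_nat_numeral)
qed

lemma delannoy_ext: "n \<le> N \<Longrightarrow> delannoy n z = (\<Sum>k\<le>N. int (Anat n k) * z ^ k)"
proof -
  assume h: "n \<le> N"
  have "delannoy n z = (\<Sum>k\<le>n. int (Anat n k) * z ^ k)"
    unfolding delannoy_def Anat_def by (simp add: atLeast0AtMost)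
  also have "\<dots> = (\<Sum>k\<le>N. int (Anat n k) * z ^ k)"
    by (rule sum.mono_neutral_left) (use h in \<open>auto simp: Azero\<close>)
  finally show ?thesis .
qed

lemma Anat0[simp]: "Anat n 0 = 1" by (simp add: Anat_def)

lemma delannoy_rec:
  "int (m+2) * delannoy (m+2) z + int (m+1) * delannoy m z
   = int (2*m+3) * (2*z+1) * delannoy (m+1) z"
proof -
  let ?N = "Suc (m+2)"
  have L: "int (m+2) * delannoy (m+2) z + int (m+1) * delannoy m z
     = (\<Sum>k\<le>?N. (int (m+2) * int (Anat (m+2) k) + int (m+1) * int (Anat m k)) * z ^ k)"
  proof -
    have a: "delannoy (m+2) z = (\<Sum>k\<le>?N. int (Anat (m+2) k) * z ^ k)" by (rule delannoy_ext) simp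
    have b: "delannoy m z = (\<Sum>k\<le>?N. int (Anat m k) * z ^ k)" by (rule delannoy_ext) simp
    show ?thesis unfolding a b sum_distrib_left sum.distrib[symmetric]
      by (rule sum.cong) (simp_all add: algebra_simps)
  qed
  also have "\<dots> = int (2*m+3) + (\<Sum>k\<le>m+2. (int (m+2) * int (Anat (m+2) (Suc k)) + int (m+1) * int (Anat m (Suc k))) * z ^ Suc k)"
    by (subst sum.atMost_Suc_shift) simp
  also have "\<dots> = int (2*m+3) + (\<Sum>k\<le>m+2. int (2*m+3) * (int (Anat (m+1) (Suc k)) + 2 * int (Anat (m+1) k)) * z ^ Suc k)"
    by (simp only: coef_int)
  finally have L': "int (m+2) * delannoy (m+2) z + int (m+1) * delannoy m z = int (2*m+3) + (\<Sum>k\<le>m+2. int (2*m+3) * (int (Anat (m+1) (Suc k)) + 2 * int (Anat (m+1) k)) * z ^ Suc k)" .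
  have D1: "delannoy (m+1) z = 1 + (\<Sum>k\<le>m+2. int (Anat (m+1) (Suc k)) * z ^ Suc k)"
  proof -
    have a: "delannoy (m+1) z = (\<Sum>k\<le>?N. int (Anat (m+1) k) * z ^ k)" by (rule delannoy_ext) simp
    show ?thesis unfolding a by (subst sum.atMost_Suc_shift) simp
  qed
  have D2: "z * delannoy (m+1) z = (\<Sum>k\<le>m+2. int (Anat (m+1) k) * z ^ Suc k)"
  proof -
    have a: "delannoy (m+1) z = (\<Sum>k\<le>m+2. int (Anat (m+1) k) * z ^ k)" by (rule delannoy_ext) simp
    show ?thesis unfolding a sum_distrib_left by (rule sum.cong) (simp_all add: algebra_simps)
  qed
  have "int (2*m+3) * (2*z+1) * delannoy (m+1) z = int (2*m+3) * (delannoy (m+1) z + 2 * (z * delannoy (m+1) z))"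
    by (simp add: algebra_simps)
  also have "\<dots> = int (2*m+3) + (\<Sum>k\<le>m+2. int (2*m+3) * (int (Anat (m+1) (Suc k)) + 2 * int (Anat (m+1) k)) * z ^ Suc k)"
    unfolding D2 by (subst D1) (simp add: sum_distrib_left sum.distrib algebra_simps)
  finally show ?thesis using L' by simp
qed



lemma delannoy_0: "delannoy 0 z = 1" by (simp add: delannoy_def)
lemma delannoy_1: "delannoy (Suc 0) z = 2*z + 1" by (simp add: delannoy_def)

lemma sum_ident:
  fixes h :: "nat \<Rightarrow> int"
  shows "(\<Sum>k<Suc n. delannoy k z * (int k * h (k-1) + int (k+1) * h (k+1) - int (2*k+1) * (2*z+1) * h k))
     = int (Suc n) * h (Suc n) * delannoy n z - int (Suc n) * h n * delannoy (Suc n) z"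
proof (induction n)
  case 0
  then show ?case by (simp add: delannoy_0 delannoy_1 algebra_simps)
next
  case (Suc n)
  have rec: "int (n+2) * delannoy (n+2) z + int (n+1) * delannoy n z
   = int (2*n+3) * (2*z+1) * delannoy (n+1) z" by (rule delannoy_rec)
  have rec': "(int n+2) * delannoy (Suc (Suc n)) z + (int n+1) * delannoy n z
   = (2 * int n+3) * (2*z+1) * delannoy (Suc n) z" using rec by (simp add: add.commute)
  have "(\<Sum>k<Suc (Suc n). delannoy k z * (int k * h (k-1) + int (k+1) * h (k+1) - int (2*k+1) * (2*z+1) * h k))
     = (int n + 1) * h (Suc n) * delannoy n z - (int n + 1) * h n * delannoy (Suc n) z
       + delannoy (Suc n) z * ((int n + 1) * h n + (int n + 2) * h (Suc (Suc n)) - (2 * int n + 3) * (2*z+1) * h (Suc n))"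
    using Suc.IH by (simp add: algebra_simps)
  also have "\<dots> = (int n + 2) * h (Suc (Suc n)) * delannoy (Suc n) z - (int n + 2) * h (Suc n) * delannoy (Suc (Suc n)) z"
  proof -
    let ?L = "(int n + 1) * h (Suc n) * delannoy n z - (int n + 1) * h n * delannoy (Suc n) z
       + delannoy (Suc n) z * ((int n + 1) * h n + (int n + 2) * h (Suc (Suc n)) - (2 * int n + 3) * (2*z+1) * h (Suc n))"
    let ?R = "(int n + 2) * h (Suc (Suc n)) * delannoy (Suc n) z - (int n + 2) * h (Suc n) * delannoy (Suc (Suc n)) z"
    have "?L - ?R = h (Suc n) * (((int n+1) * delannoy n z + (int n+2) * delannoy (Suc (Suc n)) z) - (2 * int n+3) * (2*z+1) * delannoy (Suc n) z)"
      by (simp add: algebra_simps)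
    also have "\<dots> = 0" using rec' by simp
    finally show ?thesis by simp
  qed
  finally show ?case by (simp add: algebra_simps)
qed

lemma sum_ident_dvd:
  fixes h :: "nat \<Rightarrow> int"
  assumes "n > 0"
  shows "int n dvd (\<Sum>k<n. delannoy k z * (int k * h (k-1) + int (k+1) * h (k+1) - int (2*k+1) * (2*z+1) * h k))"
proof -
  obtain m where m: "n = Suc m" using assms gr0_implies_Suc by blast
  have e: "int (Suc m) * h (Suc m) * delannoy m z - int (Suc m) * h m * delannoy (Suc m) z
     = int (Suc m) * (h (Suc m) * delannoy m z - h m * delannoy (Suc m) z)" by (simp add: algebra_simps)
  show ?thesis unfolding m sum_ident e by (rule dvd_triv_left)
qed



lemma parity_split:
  fixes f :: "nat \<Rightarrow> int"
  shows "(\<Sum>i\<le>2*v. f i) = f 0 + (\<Sum>j\<in>{1..v}. f (2*j-1) + f (2*j))"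
proof (induction v)
  case 0 then show ?case by simp
next
  case (Suc v)
  have "(\<Sum>i\<le>2*Suc v. f i) = (\<Sum>i\<le>2*v. f i) + f (2*v+1) + f (2*v+2)"
    by (simp add: algebra_simps)
  also have "\<dots> = f 0 + (\<Sum>j\<in>{1..Suc v}. f (2*j-1) + f (2*j))"
    using Suc.IH by (simp add: algebra_simps)
  finally show ?case .
qed

lemma binom_key:
  fixes u :: int
  shows "(u-1)*(u-2)^(2*w+1) + (u+1)*(u+2)^(2*w+1)
    = 2*u^(2*Suc w) + 4*(\<Sum>j\<in>{1..Suc w}. ecoef (2*Suc w - 1) j * u^(2*Suc w - 2*j))"
proof -
  define s where "s = 2*w+1"
  define f where "f i = int (s choose i) * 2^i * ((u+1) + (-1)^i*(u-1)) * u^(s-i)" for i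
  have b1: "(u+2)^s = (\<Sum>i\<le>s. int (s choose i) * 2^i * u^(s-i))"
    by (subst add.commute) (simp add: binomial_ring)
  have b2: "(u-2)^s = (\<Sum>i\<le>s. int (s choose i) * (-2)^i * u^(s-i))"
    using binomial_ring[of "-2" u s] by (simp add: add.commute)
  have "(u-1)*(u-2)^s + (u+1)*(u+2)^s = (\<Sum>i\<le>s. f i)"
    unfolding b1 b2 f_def sum_distrib_left sum.distrib[symmetric]
    by (rule sum.cong) (simp_all add: algebra_simps power_minus')
  also have "\<dots> = (\<Sum>i\<le>2*Suc w. f i)"
  proof -
    have ss: "2*Suc w = Suc s" by (simp add: s_def)
    have "s choose Suc s = 0" by (rule binomial_eq_0) simp
    then have "f (Suc s) = 0" unfolding f_def by (simp only: of_nat_0 mult_zero_left)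
    then show ?thesis unfolding ss by simp
  qed
  also have "\<dots> = f 0 + (\<Sum>j\<in>{1..Suc w}. f (2*j-1) + f (2*j))"
    by (rule parity_split)
  also have "\<dots> = 2*u^(2*Suc w) + 4*(\<Sum>j\<in>{1..Suc w}. ecoef (2*Suc w - 1) j * u^(2*Suc w - 2*j))"
  proof -
    have f0: "f 0 = 2*u^(2*Suc w)" by (simp add: f_def s_def algebra_simps)
    have fj: "f (2*j-1) + f (2*j) = 4 * (ecoef (2*Suc w - 1) j * u^(2*Suc w - 2*j))"
      if j: "j \<in> {1..Suc w}" for j
    proof -
      obtain i where i: "j = Suc i" "i \<le> w" using j by (cases j) auto
      have s1: "2*Suc w - 1 = s" by (simp add: s_def)
      have e: "ecoef s (Suc i) = int (s choose (2*i+2)) * 2^(2*i+1) + int (s choose (2*i+1)) * 2^(2*i)"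
        by (simp add: ecoef_def)
      have ex: "s - (2*i+1) = 2*w-2*i" by (simp add: s_def)
      have m1: "(-1::int)^(2*i+1) = -1" "(-1::int)^(2*i+2) = 1" by simp_all
      have fa: "f (2*i+1) = int (s choose (2*i+1)) * 2^(2*i+1) * 2 * u^(2*w-2*i)"
        unfolding f_def ex m1 by simp
      have fb: "f (2*i+2) = int (s choose (2*i+2)) * 2^(2*i+2) * (2*u) * u^(s-(2*i+2))"
        unfolding f_def m1 by simp
      have fb': "f (2*i+2) = int (s choose (2*i+2)) * 2^(2*i+2) * 2 * u^(2*w-2*i)"
      proof (cases "i < w")
        case True
        then have "Suc (s-(2*i+2)) = 2*w-2*i" by (simp add: s_def)
        then have "u * u^(s-(2*i+2)) = u^(2*w-2*i)"
          by (metis power_Suc)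
        then show ?thesis unfolding fb by (simp only: mult.assoc mult.left_commute)
      next
        case False
        then have "s < 2*i+2" using i by (simp add: s_def)
        then have "s choose (2*i+2) = 0" by (rule binomial_eq_0)
        then show ?thesis unfolding fb by (simp only: of_nat_0 mult_zero_left)
      qed
      have ij: "2*j-1 = 2*i+1" "2*j = 2*i+2" "2*Suc w - 2*j = 2*w-2*i" using i by simp_all
      have p1: "(2::int)^(2*i+1) = 2 * 2^(2*i)" "(2::int)^(2*i+2) = 4 * 2^(2*i)" by (simp_all add: power_add)
      have gi: "f (2*i+1) + f (2*i+2) = 4 * (ecoef s (Suc i) * u^(2*w-2*i))"
        unfolding e fa fb' p1 by (simp add: algebra_simps)
      have "f (2*j-1) + f (2*j) = f (2*i+1) + f (2*i+2)" using ij by simp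
      also have "\<dots> = 4 * (ecoef s (Suc i) * u^(2*w-2*i))" by (rule gi)
      also have "\<dots> = 4*(ecoef (2*Suc w-1) j * u^(2*Suc w - 2*j))" using ij s1 i(1) ex by simp
      finally show ?thesis .
    qed
    show ?thesis unfolding f0 using fj by (simp add: sum_distrib_left)
  qed
  finally show ?thesis by (simp add: s_def)
qed



definition esum :: "nat \<Rightarrow> int \<Rightarrow> int" where
  "esum v u = (\<Sum>j\<in>{1..v}. ecoef (2*v - 1) j * u^(2*v - 2*j))"

lemma shift_terms:
  fixes k :: nat
  shows "2 * (int k * (int (2*(k-1)+1))^s) = (int (2*k+1) - 1) * (int (2*k+1) - 2)^s"
    and "2 * (int (k+1) * (int (2*(k+1)+1))^s) = (int (2*k+1) + 1) * (int (2*k+1) + 2)^s"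
proof -
  show "2 * (int k * (int (2*(k-1)+1))^s) = (int (2*k+1) - 1) * (int (2*k+1) - 2)^s"
  proof (cases k)
    case 0 then show ?thesis by simp
  next
    case (Suc i)
    then show ?thesis by (simp add: algebra_simps)
  qed
  show "2 * (int (k+1) * (int (2*(k+1)+1))^s) = (int (2*k+1) + 1) * (int (2*k+1) + 2)^s"
    by (simp add: algebra_simps)
qed

lemma L_plain:
  fixes k w :: nat and z :: int
  defines "h \<equiv> (\<lambda>k::nat. (int (2*k+1))^(2*w+1))"
  shows "int k * h (k-1) + int (k+1) * h (k+1) - int (2*k+1) * (2*z+1) * h k
     = 2 * (- z * (int (2*k+1))^(2*Suc w) + esum (Suc w) (int (2*k+1)))"
proof -
  define u where "u = int (2*k+1)"
  have a: "2 * (int k * h (k-1)) = (u - 1) * (u - 2)^(2*w+1)"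
    unfolding h_def u_def by (rule shift_terms(1))
  have b: "2 * (int (k+1) * h (k+1)) = (u + 1) * (u + 2)^(2*w+1)"
    unfolding h_def u_def by (rule shift_terms(2))
  have c: "h k = u^(2*w+1)" unfolding h_def u_def ..
  have key: "(u-1)*(u-2)^(2*w+1) + (u+1)*(u+2)^(2*w+1) = 2*u^(2*Suc w) + 4*esum (Suc w) u"
    unfolding esum_def by (rule binom_key)
  have "2 * (int k * h (k-1) + int (k+1) * h (k+1) - int (2*k+1) * (2*z+1) * h k)
     = 2 * (int k * h (k-1)) + 2 * (int (k+1) * h (k+1)) - 2 * (2*z+1) * (u * h k)"
    by (simp add: algebra_simps u_def)
  also have "\<dots> = 2 * (2 * (- z * u^(2*Suc w) + esum (Suc w) u))"
    unfolding a b c using key by (simp add: algebra_simps)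
  finally show ?thesis unfolding u_def by simp
qed

lemma L_alt:
  fixes k w :: nat and z :: int
  defines "h \<equiv> (\<lambda>k::nat. (-1)^k * (int (2*k+1))^(2*w+1))"
  shows "int k * h (k-1) + int (k+1) * h (k+1) - int (2*k+1) * (2*z+1) * h k
     = -2 * (-1)^k * ((z+1) * (int (2*k+1))^(2*Suc w) + esum (Suc w) (int (2*k+1)))"
proof -
  define u where "u = int (2*k+1)"
  define g where "g = (\<lambda>k::nat. (int (2*k+1))^(2*w+1))"
  have a0: "2 * (int k * g (k-1)) = (u - 1) * (u - 2)^(2*w+1)"
    unfolding g_def u_def by (rule shift_terms(1))
  have a: "int k * h (k-1) = (- ((-1::int)^k)) * (int k * g (k-1))"
  proof (cases k)
    case 0 then show ?thesis by simp
  next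
    case (Suc i) then show ?thesis by (simp add: h_def g_def)
  qed
  have b0: "2 * (int (k+1) * g (k+1)) = (u + 1) * (u + 2)^(2*w+1)"
    unfolding g_def u_def by (rule shift_terms(2))
  have b: "int (k+1) * h (k+1) = (- ((-1::int)^k)) * (int (k+1) * g (k+1))"
    by (simp add: h_def g_def)
  have c: "h k = (-1)^k * u^(2*w+1)" unfolding h_def u_def ..
  have key: "(u-1)*(u-2)^(2*w+1) + (u+1)*(u+2)^(2*w+1) = 2*u^(2*Suc w) + 4*esum (Suc w) u"
    unfolding esum_def by (rule binom_key)
  have "2 * (int k * h (k-1) + int (k+1) * h (k+1) - int (2*k+1) * (2*z+1) * h k)
     = (- ((-1::int)^k)) * (2 * (int k * g (k-1)) + 2 * (int (k+1) * g (k+1)) + 2 * (2*z+1) * (u * u^(2*w+1)))"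
    unfolding a b c by (simp add: algebra_simps u_def)
  also have "\<dots> = 2 * (-2 * (-1)^k * ((z+1) * u^(2*Suc w) + esum (Suc w) u))"
    unfolding a0 b0 key by (simp add: algebra_simps)
  finally show ?thesis unfolding u_def by simp
qed



definition Aw :: "nat \<Rightarrow> int \<Rightarrow> nat \<Rightarrow> int" where
  "Aw n z w = (\<Sum>k<n. (int (2*k+1))^(2*w) * delannoy k z)"
definition Bw :: "nat \<Rightarrow> int \<Rightarrow> nat \<Rightarrow> int" where
  "Bw n z w = (\<Sum>k<n. (-1)^k * (int (2*k+1))^(2*w) * delannoy k z)"

lemma esum_swap:
  "(\<Sum>k<n. c k * esum v (int (2*k+1)) * delannoy k z)
   = (\<Sum>j\<in>{1..v}. ecoef (2*v - 1) j * (\<Sum>k<n. c k * (int (2*k+1))^(2*(v-j)) * delannoy k z))"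
proof -
  have "(\<Sum>k<n. c k * esum v (int (2*k+1)) * delannoy k z)
     = (\<Sum>k<n. \<Sum>j\<in>{1..v}. ecoef (2*v - 1) j * (c k * (int (2*k+1))^(2*(v-j)) * delannoy k z))"
    unfolding esum_def
    by (rule sum.cong) (simp_all add: sum_distrib_left sum_distrib_right diff_mult_distrib2 algebra_simps)
  also have "\<dots> = (\<Sum>j\<in>{1..v}. \<Sum>k<n. ecoef (2*v - 1) j * (c k * (int (2*k+1))^(2*(v-j)) * delannoy k z))"
    by (rule sum.swap)
  also have "\<dots> = (\<Sum>j\<in>{1..v}. ecoef (2*v - 1) j * (\<Sum>k<n. c k * (int (2*k+1))^(2*(v-j)) * delannoy k z))"
    by (simp add: sum_distrib_left)
  finally show ?thesis .
qed

lemma rec_A: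
  assumes "n > 0" "coprime (int n) 2"
  shows "int n dvd (z * Aw n z (Suc w) - (\<Sum>j\<in>{1..Suc w}. ecoef (2*Suc w - 1) j * Aw n z (Suc w - j)))"
proof -
  define h where "h = (\<lambda>k::nat. (int (2*k+1))^(2*w+1))"
  have d: "int n dvd (\<Sum>k<n. delannoy k z * (int k * h (k-1) + int (k+1) * h (k+1) - int (2*k+1) * (2*z+1) * h k))"
    by (rule sum_ident_dvd[OF assms(1)])
  have "(\<Sum>k<n. delannoy k z * (int k * h (k-1) + int (k+1) * h (k+1) - int (2*k+1) * (2*z+1) * h k))
      = (\<Sum>k<n. delannoy k z * (2 * (- z * (int (2*k+1))^(2*Suc w) + esum (Suc w) (int (2*k+1)))))"
    unfolding h_def L_plain ..
  also have "\<dots> = (\<Sum>k<n. (-2) * (z * ((int (2*k+1))^(2*Suc w) * delannoy k z)) + 2 * (1 * esum (Suc w) (int (2*k+1)) * delannoy k z))"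
    by (rule sum.cong) (simp_all add: algebra_simps)
  also have "\<dots> = (-2) * (z * Aw n z (Suc w)) + 2 * (\<Sum>k<n. 1 * esum (Suc w) (int (2*k+1)) * delannoy k z)"
    by (simp only: Aw_def sum.distrib sum_distrib_left)
  also have "\<dots> = (-2) * (z * Aw n z (Suc w) - (\<Sum>j\<in>{1..Suc w}. ecoef (2*Suc w - 1) j * Aw n z (Suc w - j)))"
    unfolding esum_swap Aw_def by (simp add: algebra_simps)
  finally have "int n dvd (-2) * (z * Aw n z (Suc w) - (\<Sum>j\<in>{1..Suc w}. ecoef (2*Suc w - 1) j * Aw n z (Suc w - j)))"
    using d by simp
  moreover have "coprime (int n) (-2)" using assms(2) by simp
  ultimately show ?thesis using coprime_dvd_mult_right_iff by blast
qed

lemma rec_B: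
  assumes "n > 0" "coprime (int n) 2"
  shows "int n dvd ((z+1) * Bw n z (Suc w) + (\<Sum>j\<in>{1..Suc w}. ecoef (2*Suc w - 1) j * Bw n z (Suc w - j)))"
proof -
  define h where "h = (\<lambda>k::nat. (-1)^k * (int (2*k+1))^(2*w+1))"
  have d: "int n dvd (\<Sum>k<n. delannoy k z * (int k * h (k-1) + int (k+1) * h (k+1) - int (2*k+1) * (2*z+1) * h k))"
    by (rule sum_ident_dvd[OF assms(1)])
  have "(\<Sum>k<n. delannoy k z * (int k * h (k-1) + int (k+1) * h (k+1) - int (2*k+1) * (2*z+1) * h k))
      = (\<Sum>k<n. delannoy k z * (-2 * (-1)^k * ((z+1) * (int (2*k+1))^(2*Suc w) + esum (Suc w) (int (2*k+1)))))"
    unfolding h_def L_alt ..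
  also have "\<dots> = (\<Sum>k<n. (-2) * ((z+1) * ((-1)^k * (int (2*k+1))^(2*Suc w) * delannoy k z)) + (-2) * ((-1)^k * esum (Suc w) (int (2*k+1)) * delannoy k z))"
    by (rule sum.cong) (simp_all add: algebra_simps)
  also have "\<dots> = (-2) * ((z+1) * Bw n z (Suc w)) + (-2) * (\<Sum>k<n. (-1)^k * esum (Suc w) (int (2*k+1)) * delannoy k z)"
    by (simp only: Bw_def sum.distrib sum_distrib_left)
  also have "\<dots> = (-2) * ((z+1) * Bw n z (Suc w) + (\<Sum>j\<in>{1..Suc w}. ecoef (2*Suc w - 1) j * Bw n z (Suc w - j)))"
    unfolding esum_swap Bw_def by (simp add: algebra_simps)
  finally have "int n dvd (-2) * ((z+1) * Bw n z (Suc w) + (\<Sum>j\<in>{1..Suc w}. ecoef (2*Suc w - 1) j * Bw n z (Suc w - j)))"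
    using d by simp
  moreover have "coprime (int n) (-2)" using assms(2) by simp
  ultimately show ?thesis using coprime_dvd_mult_right_iff by blast
qed



fun cP :: "nat \<Rightarrow> int poly" where
  "cP 0 = 1"
| "cP (Suc m) = (\<Sum>j\<in>{1..Suc m}. Polynomial.smult (ecoef (2 * Suc m - 1) j) ([:0,1:]^(j-1) * cP (Suc m - j)))"

fun tP :: "nat \<Rightarrow> int poly" where
  "tP 0 = 1"
| "tP (Suc m) = - (\<Sum>j\<in>{1..Suc m}. Polynomial.smult (ecoef (2 * Suc m - 1) j) ([:1,1:]^(j-1) * tP (Suc m - j)))"

lemma mpi_add: "map_poly (of_int::int\<Rightarrow>'a::comm_ring_1) (p+q) = map_poly of_int p + map_poly of_int q"
  by (rule poly_eqI) (simp add: coeff_map_poly)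
lemma mpi_uminus: "map_poly (of_int::int\<Rightarrow>'a::comm_ring_1) (-p) = - map_poly of_int p"
  by (rule poly_eqI) (simp add: coeff_map_poly)
lemma mpi_mult: "map_poly (of_int::int\<Rightarrow>'a::comm_ring_1) (p*q) = map_poly of_int p * map_poly of_int q"
  by (rule poly_eqI) (simp add: coeff_map_poly coeff_mult)
lemma mpi_smult: "map_poly (of_int::int\<Rightarrow>'a::comm_ring_1) (Polynomial.smult c p) = Polynomial.smult (of_int c) (map_poly of_int p)"
  by (rule map_poly_smult) simp_all
lemma mpi_sum: "map_poly (of_int::int\<Rightarrow>'a::comm_ring_1) (\<Sum>j\<in>A. f j) = (\<Sum>j\<in>A. map_poly of_int (f j))"
  by (induction A rule: infinite_finite_induct) (simp_all add: mpi_add)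
lemma mpi_power: "map_poly (of_int::int\<Rightarrow>'a::comm_ring_1) (p ^ k) = (map_poly of_int p) ^ k"
  by (induction k) (simp_all add: mpi_mult)
lemma mpi_pCons: "map_poly (of_int::int\<Rightarrow>'a::comm_ring_1) (pCons a p) = pCons (of_int a) (map_poly of_int p)"
  by (rule map_poly_pCons) simp

lemma poly_mpi_of_int: "poly (map_poly (of_int::int\<Rightarrow>'a::comm_ring_1) p) (of_int z) = of_int (poly p z)"
  by (induction p) (simp_all add: mpi_pCons)

lemma cP_eval:
  "poly (map_poly (of_int::int\<Rightarrow>'a::comm_ring_1) (cP (Suc m))) x
   = (\<Sum>j\<in>{1..Suc m}. of_int (ecoef (2 * Suc m - 1) j) * x^(j-1) * poly (map_poly of_int (cP (Suc m - j))) x)"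
  by (simp only: cP.simps mpi_sum mpi_smult mpi_mult mpi_power mpi_pCons poly_sum poly_smult poly_mult poly_power)
     (simp add: algebra_simps)

lemma tP_eval:
  "poly (map_poly (of_int::int\<Rightarrow>'a::comm_ring_1) (tP (Suc m))) x
   = - (\<Sum>j\<in>{1..Suc m}. of_int (ecoef (2 * Suc m - 1) j) * (x+1)^(j-1) * poly (map_poly of_int (tP (Suc m - j))) x)"
  by (simp only: tP.simps mpi_uminus mpi_sum mpi_smult mpi_mult mpi_power mpi_pCons poly_sum poly_smult poly_mult poly_power poly_minus)
     (simp add: algebra_simps)

lemma cP_eval_int:
  "poly (cP (Suc m)) x = (\<Sum>j\<in>{1..Suc m}. ecoef (2 * Suc m - 1) j * x^(j-1) * poly (cP (Suc m - j)) x)"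
  using cP_eval[of m x] by (simp add: map_poly_idI)

lemma tP_eval_int:
  "poly (tP (Suc m)) x = - (\<Sum>j\<in>{1..Suc m}. ecoef (2 * Suc m - 1) j * (x+1)^(j-1) * poly (tP (Suc m - j)) x)"
  using tP_eval[of m x] by (simp add: map_poly_idI)

lemma frac_aux:
  fixes y e P :: rat
  assumes "y \<noteq> 0"
  shows "(1/y) * (e * (P / y^k)) = e * y^i * P / (y * y^i * y^k)"
  using assms by (simp add: field_simps)

lemma cseq_poly:
  fixes x :: rat
  assumes "x \<noteq> 0"
  shows "cseq x w = poly (map_poly of_int (cP w)) x / x ^ w"
proof (induction w rule: less_induct)
  case (less w)
  show ?case
  proof (cases w)
    case 0 then show ?thesis by simp
  next
    case (Suc m)
    have "cseq x (Suc m) = (\<Sum>j\<in>{1..Suc m}. (1/x) * (of_int (ecoef (2 * Suc m - 1) j) * cseq x (Suc m - j)))"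
      by (simp only: cseq.simps sum_distrib_left)
    also have "\<dots> = (\<Sum>j\<in>{1..Suc m}. of_int (ecoef (2 * Suc m - 1) j) * x^(j-1) * poly (map_poly of_int (cP (Suc m - j))) x / x^Suc m)"
    proof (rule sum.cong)
      fix j assume j: "j \<in> {1..Suc m}"
      then have lt: "Suc m - j < w" using Suc by auto
      have pw: "x^Suc m = x * x^(j-1) * x^(Suc m - j)"
        using j by (simp add: power_add[symmetric])
      show "(1/x) * (of_int (ecoef (2 * Suc m - 1) j) * cseq x (Suc m - j))
          = of_int (ecoef (2 * Suc m - 1) j) * x^(j-1) * poly (map_poly of_int (cP (Suc m - j))) x / x^Suc m"
        unfolding less.IH[OF lt] pw using assms by (rule frac_aux)
    qed simp
    also have "\<dots> = poly (map_poly of_int (cP (Suc m))) x / x ^ Suc m"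
      by (simp only: cP_eval sum_divide_distrib)
    finally show ?thesis using Suc by simp
  qed
qed

lemma ctseq_poly:
  fixes x :: rat
  assumes "x \<noteq> -1"
  shows "ctseq x w = poly (map_poly of_int (tP w)) x / (x+1) ^ w"
proof (induction w rule: less_induct)
  case (less w)
  have x1: "x + 1 \<noteq> 0" using assms by (metis add.commute add_eq_0_iff)
  show ?case
  proof (cases w)
    case 0 then show ?thesis by simp
  next
    case (Suc m)
    have "ctseq x (Suc m) = - (\<Sum>j\<in>{1..Suc m}. (1/(x+1)) * (of_int (ecoef (2 * Suc m - 1) j) * ctseq x (Suc m - j)))"
      by (simp only: ctseq.simps sum_distrib_left[symmetric] mult_minus_left)
    also have "(\<Sum>j\<in>{1..Suc m}. (1/(x+1)) * (of_int (ecoef (2 * Suc m - 1) j) * ctseq x (Suc m - j)))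
       = (\<Sum>j\<in>{1..Suc m}. of_int (ecoef (2 * Suc m - 1) j) * (x+1)^(j-1) * poly (map_poly of_int (tP (Suc m - j))) x / (x+1)^Suc m)"
    proof (rule sum.cong)
      fix j assume j: "j \<in> {1..Suc m}"
      then have lt: "Suc m - j < w" using Suc by auto
      have pw: "(x+1)^Suc m = (x+1) * (x+1)^(j-1) * (x+1)^(Suc m - j)"
        using j by (simp add: power_add[symmetric])
      show "(1/(x+1)) * (of_int (ecoef (2 * Suc m - 1) j) * ctseq x (Suc m - j))
          = of_int (ecoef (2 * Suc m - 1) j) * (x+1)^(j-1) * poly (map_poly of_int (tP (Suc m - j))) x / (x+1)^Suc m"
        unfolding less.IH[OF lt] pw using x1 by (rule frac_aux)
    qed simp
    also have "- (\<Sum>j\<in>{1..Suc m}. of_int (ecoef (2 * Suc m - 1) j) * (x+1)^(j-1) * poly (map_poly of_int (tP (Suc m - j))) x / (x+1)^Suc m)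
        = poly (map_poly of_int (tP (Suc m))) x / (x+1) ^ Suc m"
      by (simp only: tP_eval sum_divide_distrib minus_divide_left[symmetric])
    finally show ?thesis using Suc by simp
  qed
qed



lemma congA:
  assumes "n > 0" "coprime (int n) 2"
  shows "int n dvd (z^w * Aw n z w - poly (cP w) z * Aw n z 0)"
proof (induction w rule: less_induct)
  case (less w)
  show ?case
  proof (cases w)
    case 0 then show ?thesis by simp
  next
    case (Suc m)
    let ?e = "\<lambda>j. ecoef (2 * Suc m - 1) j"
    have r: "int n dvd (z * Aw n z (Suc m) - (\<Sum>j\<in>{1..Suc m}. ?e j * Aw n z (Suc m - j)))"
      by (rule rec_A[OF assms])
    have ih: "int n dvd (\<Sum>j\<in>{1..Suc m}. ?e j * z^(j-1) * (z^(Suc m - j) * Aw n z (Suc m - j) - poly (cP (Suc m - j)) z * Aw n z 0))"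
    proof (rule dvd_sum)
      fix j assume j: "j \<in> {1..Suc m}"
      then have lt: "Suc m - j < w" using Suc by auto
      show "int n dvd ?e j * z^(j-1) * (z^(Suc m - j) * Aw n z (Suc m - j) - poly (cP (Suc m - j)) z * Aw n z 0)"
        using less.IH[OF lt] by (rule dvd_mult)
    qed
    have s1: "z^m * (\<Sum>j\<in>{1..Suc m}. ?e j * Aw n z (Suc m - j))
       = (\<Sum>j\<in>{1..Suc m}. ?e j * z^(j-1) * (z^(Suc m - j) * Aw n z (Suc m - j)))"
      unfolding sum_distrib_left
    proof (rule sum.cong)
      fix j assume j: "j \<in> {1..Suc m}"
      then have "z^m = z^(j-1) * z^(Suc m - j)" by (simp add: power_add[symmetric])
      then show "z^m * (?e j * Aw n z (Suc m - j)) = ?e j * z^(j-1) * (z^(Suc m - j) * Aw n z (Suc m - j))"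
        by (simp add: algebra_simps)
    qed simp
    have s2: "poly (cP (Suc m)) z * Aw n z 0 = (\<Sum>j\<in>{1..Suc m}. ?e j * z^(j-1) * (poly (cP (Suc m - j)) z * Aw n z 0))"
      unfolding cP_eval_int sum_distrib_right by (simp add: algebra_simps)
    have "z^Suc m * Aw n z (Suc m) - poly (cP (Suc m)) z * Aw n z 0
      = z^m * (z * Aw n z (Suc m) - (\<Sum>j\<in>{1..Suc m}. ?e j * Aw n z (Suc m - j)))
        + (\<Sum>j\<in>{1..Suc m}. ?e j * z^(j-1) * (z^(Suc m - j) * Aw n z (Suc m - j) - poly (cP (Suc m - j)) z * Aw n z 0))"
      unfolding right_diff_distrib s1 s2 sum_subtractf by (simp add: algebra_simps)
    also have "int n dvd \<dots>" using r ih by (intro dvd_add dvd_mult) 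
    finally show ?thesis using Suc by simp
  qed
qed

lemma congB:
  assumes "n > 0" "coprime (int n) 2"
  shows "int n dvd ((z+1)^w * Bw n z w - poly (tP w) z * Bw n z 0)"
proof (induction w rule: less_induct)
  case (less w)
  show ?case
  proof (cases w)
    case 0 then show ?thesis by simp
  next
    case (Suc m)
    let ?e = "\<lambda>j. ecoef (2 * Suc m - 1) j"
    have r: "int n dvd ((z+1) * Bw n z (Suc m) + (\<Sum>j\<in>{1..Suc m}. ?e j * Bw n z (Suc m - j)))"
      by (rule rec_B[OF assms])
    have ih: "int n dvd (\<Sum>j\<in>{1..Suc m}. ?e j * (z+1)^(j-1) * ((z+1)^(Suc m - j) * Bw n z (Suc m - j) - poly (tP (Suc m - j)) z * Bw n z 0))"
    proof (rule dvd_sum)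
      fix j assume j: "j \<in> {1..Suc m}"
      then have lt: "Suc m - j < w" using Suc by auto
      show "int n dvd ?e j * (z+1)^(j-1) * ((z+1)^(Suc m - j) * Bw n z (Suc m - j) - poly (tP (Suc m - j)) z * Bw n z 0)"
        using less.IH[OF lt] by (rule dvd_mult)
    qed
    have s1: "(z+1)^m * (\<Sum>j\<in>{1..Suc m}. ?e j * Bw n z (Suc m - j))
       = (\<Sum>j\<in>{1..Suc m}. ?e j * (z+1)^(j-1) * ((z+1)^(Suc m - j) * Bw n z (Suc m - j)))"
      unfolding sum_distrib_left
    proof (rule sum.cong)
      fix j assume j: "j \<in> {1..Suc m}"
      then have "(z+1)^m = (z+1)^(j-1) * (z+1)^(Suc m - j)" by (simp add: power_add[symmetric])
      then show "(z+1)^m * (?e j * Bw n z (Suc m - j)) = ?e j * (z+1)^(j-1) * ((z+1)^(Suc m - j) * Bw n z (Suc m - j))"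
        by (simp add: algebra_simps)
    qed simp
    have s2: "poly (tP (Suc m)) z * Bw n z 0 = - (\<Sum>j\<in>{1..Suc m}. ?e j * (z+1)^(j-1) * (poly (tP (Suc m - j)) z * Bw n z 0))"
      unfolding tP_eval_int mult_minus_left sum_distrib_right by (simp add: algebra_simps)
    have "(z+1)^Suc m * Bw n z (Suc m) - poly (tP (Suc m)) z * Bw n z 0
      = (z+1)^m * ((z+1) * Bw n z (Suc m) + (\<Sum>j\<in>{1..Suc m}. ?e j * Bw n z (Suc m - j)))
        - (\<Sum>j\<in>{1..Suc m}. ?e j * (z+1)^(j-1) * ((z+1)^(Suc m - j) * Bw n z (Suc m - j) - poly (tP (Suc m - j)) z * Bw n z 0))"
      unfolding distrib_left s1 s2 right_diff_distrib sum_subtractf by (simp add: algebra_simps)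
    also have "int n dvd \<dots>" using r ih by (intro dvd_diff dvd_mult) 
    finally show ?thesis using Suc by simp
  qed
qed

theorem theorem1p1:
  fixes n v :: nat and z :: int
  assumes "n > 0" and "z \<noteq> 0" and "z \<noteq> -1"
  shows "(\<exists>P :: int poly. \<forall>x :: rat. x \<noteq> 0 \<longrightarrow>
            cseq x v = poly (map_poly of_int P) x / x ^ v)
       \<and> (\<exists>P :: int poly. \<forall>x :: rat. x \<noteq> -1 \<longrightarrow>
            ctseq x v = poly (map_poly of_int P) x / (x + 1) ^ v)
       \<and> (coprime (int n) (2 * z) \<longrightarrow>
            rat_cong (of_int (\<Sum>k<n. (2 * int k + 1) ^ (2 * v) * delannoy k z))
                     (cseq (of_int z) v * of_int (\<Sum>k<n. delannoy k z)) (int n))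
       \<and> (coprime (int n) (2 * (z + 1)) \<longrightarrow>
            rat_cong (of_int (\<Sum>k<n. (-1) ^ k * (2 * int k + 1) ^ (2 * v) * delannoy k z))
                     (ctseq (of_int z) v * of_int (\<Sum>k<n. (-1) ^ k * delannoy k z)) (int n))"
proof (intro conjI impI)
  show "\<exists>P :: int poly. \<forall>x :: rat. x \<noteq> 0 \<longrightarrow> cseq x v = poly (map_poly of_int P) x / x ^ v"
    using cseq_poly by blast
  show "\<exists>P :: int poly. \<forall>x :: rat. x \<noteq> -1 \<longrightarrow> ctseq x v = poly (map_poly of_int P) x / (x + 1) ^ v"
    using ctseq_poly by blast
next
  assume cop: "coprime (int n) (2 * z)"
  then have c2: "coprime (int n) 2" and cz: "coprime (int n) z" by simp_all
  have S1: "(\<Sum>k<n. (2 * int k + 1) ^ (2 * v) * delannoy k z) = Aw n z v" unfolding Aw_def by (rule sum.cong) (simp_all add: add.commute)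
  have S0: "(\<Sum>k<n. delannoy k z) = Aw n z 0" by (simp add: Aw_def)
  have zq: "(of_int z :: rat) \<noteq> 0" using assms(2) by simp
  have cs: "cseq (of_int z) v = of_int (poly (cP v) z) / (of_int z)^v"
    using cseq_poly[OF zq] by (simp add: poly_mpi_of_int)
  show "rat_cong (of_int (\<Sum>k<n. (2 * int k + 1) ^ (2 * v) * delannoy k z))
                     (cseq (of_int z) v * of_int (\<Sum>k<n. delannoy k z)) (int n)"
    unfolding rat_cong_def S1 S0
  proof (intro exI conjI)
    show "coprime (z^v) (int n)" using cz by (simp add: coprime_commute)
    show "of_int (z^v) * (of_int (Aw n z v) - cseq (of_int z) v * of_int (Aw n z 0))
        = (of_int (z^v * Aw n z v - poly (cP v) z * Aw n z 0) :: rat)"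
      unfolding cs using zq by (simp add: field_simps)
    show "int n dvd (z^v * Aw n z v - poly (cP v) z * Aw n z 0)"
      by (rule congA[OF assms(1) c2])
  qed
next
  assume cop: "coprime (int n) (2 * (z + 1))"
  then have "coprime (int n) 2 \<and> coprime (int n) (z+1)" by (simp only: coprime_mult_right_iff)
  then have c2: "coprime (int n) 2" and cz: "coprime (int n) (z+1)" by blast+
  have S1: "(\<Sum>k<n. (-1) ^ k * (2 * int k + 1) ^ (2 * v) * delannoy k z) = Bw n z v" unfolding Bw_def by (rule sum.cong) (simp_all add: add.commute)
  have S0: "(\<Sum>k<n. (-1) ^ k * delannoy k z) = Bw n z 0" by (simp add: Bw_def)
  have zq: "(of_int z :: rat) \<noteq> -1" using assms(3) by simp
  have zq1: "(of_int z :: rat) + 1 \<noteq> 0" using assms(3) by (metis add_eq_0_iff of_int_1 of_int_add of_int_eq_0_iff add.commute)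
  have cs: "ctseq (of_int z) v = of_int (poly (tP v) z) / (of_int z + 1)^v"
    using ctseq_poly[OF zq] by (simp add: poly_mpi_of_int)
  show "rat_cong (of_int (\<Sum>k<n. (-1) ^ k * (2 * int k + 1) ^ (2 * v) * delannoy k z))
                     (ctseq (of_int z) v * of_int (\<Sum>k<n. (-1) ^ k * delannoy k z)) (int n)"
    unfolding rat_cong_def S1 S0
  proof (intro exI conjI)
    show "coprime ((z+1)^v) (int n)" using cz by (simp add: coprime_commute)
    show "of_int ((z+1)^v) * (of_int (Bw n z v) - ctseq (of_int z) v * of_int (Bw n z 0))
        = (of_int ((z+1)^v * Bw n z v - poly (tP v) z * Bw n z 0) :: rat)"
      unfolding cs using zq1 by (simp add: field_simps)
    show "int n dvd ((z+1)^v * Bw n z v - poly (tP v) z * Bw n z 0)"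
      by (rule congB[OF assms(1) c2])
  qed
qed

end
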